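(* Let $\mathcal{F}$ be an argumentation framework and $S\subseteq A_{\mathcal{F}}$. For each $a\in A_{\mathcal{F}}$ and each ordinal $\alpha$, $$C^\alpha_S(a)=\{b: a\Rightarrow^{A_{\mathcal{F}}\setminus\Delta^\alpha_{\mathcal{F},S}}_{\mathcal{F}}b\ \text{ and }\ b\Rightarrow^{A_{\mathcal{F}}\setminus\Delta^\alpha_{\mathcal{F},S}}_{\mathcal{F}}a\}.$$
   Context: An argumentation framework is $\mathcal{F}=(A_{\mathcal{F}},R_{\mathcal{F}})$ with $R_{\mathcal{F}}\subseteq A_{\mathcal{F}}\times A_{\mathcal{F}}$; $a\rightarrow b$ means $(a,b)\in R_{\mathcal{F}}$. $\mathcal{F}|_B=(A_{\mathcal{F}}\cap B,R_{\mathcal{F}}\cap(B\times B))$. $\mathrm{SCC}(a)$ is the set of $b$ with directed attack paths (possibly of length 0) from $a$ to $b$ and from $b$ to $a$. $D_S(X)=\{b\in X:\exists a\in S\setminus X,\ a\rightarrow b\}$. $C^0_S(a)=\mathrm{SCC}(a)$; $C^{\alpha+1}_S(a)$ = the strongly connected component of $a$ in $\mathcal{F}|_{C^\alpha_S(a)\setminus D_S(C^\alpha_S(a))}$ (empty if $a$ is not in that set); for limit $\lambda$, $C^\lambda_S(a)$ = the strongly connected component of $a$ in $\mathcal{F}|_{\bigcap_{\alpha<\lambda}C^\alpha_S(a)}$. $a\Rightarrow^B_{\mathcal{F}}b$ ($b$ reachable from $a$ modulo $B$) means there is a directed attack path from $a$ to $b$ in $\mathcal{F}|_B$. For $D\subseteq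 A_{\mathcal{F}}$, $\Delta_{\mathcal{F},S}(D)=\{a\in A_{\mathcal{F}}:\exists b\in S\,(b\rightarrow a\text{ and not }a\Rightarrow^{A_{\mathcal{F}}\setminus D}_{\mathcal{F}}b)\}$. The iterates are $\Delta^0_{\mathcal{F},S}=\emptyset$, $\Delta^{\alpha+1}_{\mathcal{F},S}=\Delta_{\mathcal{F},S}(\Delta^\alpha_{\mathcal{F},S})$, and $\Delta^\lambda_{\mathcal{F},S}=\bigcup_{\alpha<\lambda}\Delta^\alpha_{\mathcal{F},S}$ for limit $\lambda$. *)

theory Defs
  imports Main
begin

text \<open>An argumentation framework is given by its set of arguments A and its
attack relation R (with R \<subseteq> A \<times> A).\<close>

text \<open>reach A R B a b: there is a directed attack path (possibly of length 0)
from a to b in the restricted framework F|_B.\<close>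
definition reach :: "'a set \<Rightarrow> ('a \<times> 'a) set \<Rightarrow> 'a set \<Rightarrow> 'a \<Rightarrow> 'a \<Rightarrow> bool" where
  "reach A R B a b \<longleftrightarrow>
     (a, b) \<in> Id_on (A \<inter> B) \<union> (R \<inter> ((A \<inter> B) \<times> (A \<inter> B)))\<^sup>+"

text \<open>Strongly connected component of a in F|_X (empty if a is not in A \<inter> X).\<close>
definition scc_in :: "'a set \<Rightarrow> ('a \<times> 'a) set \<Rightarrow> 'a set \<Rightarrow> 'a \<Rightarrow> 'a set" where
  "scc_in A R X a = {b. reach A R X a b \<and> reach A R X b a}"

definition SCC :: "'a set \<Rightarrow> ('a \<times> 'a) set \<Rightarrow> 'a \<Rightarrow> 'a set" where
  "SCC A R a = scc_in A R A a"

definition D_set :: "('a \<times> 'a) set \<Rightarrow> 'a set \<Rightarrow> 'a set \<Rightarrow> 'a set" where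
  "D_set R S X = {b \<in> X. \<exists>a \<in> S - X. (a, b) \<in> R}"

definition Delta_op :: "'a set \<Rightarrow> ('a \<times> 'a) set \<Rightarrow> 'a set \<Rightarrow> 'a set \<Rightarrow> 'a set" where
  "Delta_op A R S D = {a \<in> A. \<exists>b \<in> S. (b, a) \<in> R \<and> \<not> reach A R (A - D) a b}"

text \<open>Transfinite recursion over a well-ordered type 'o (ordinals are represented
by elements of an arbitrary well-ordered type): z at the least element, s applied
to the value at the immediate predecessor at successor points, and l applied to the
set of earlier values at limit points.\<close>
definition ord_rec :: "'b \<Rightarrow> ('b \<Rightarrow> 'b) \<Rightarrow> ('b set \<Rightarrow> 'b) \<Rightarrow> 'o::wellorder \<Rightarrow> 'b" where
  "ord_rec z s l = wfrec {(x, y). x < y}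
     (\<lambda>f \<alpha>. if \<forall>\<beta>. \<not> \<beta> < \<alpha> then z
            else if \<exists>\<beta>. \<beta> < \<alpha> \<and> (\<forall>\<gamma>. \<gamma> < \<alpha> \<longrightarrow> \<gamma> \<le> \<beta>)
            then s (f (THE \<beta>. \<beta> < \<alpha> \<and> (\<forall>\<gamma>. \<gamma> < \<alpha> \<longrightarrow> \<gamma> \<le> \<beta>)))
            else l (f ` {\<beta>. \<beta> < \<alpha>}))"

definition C_iter :: "'a set \<Rightarrow> ('a \<times> 'a) set \<Rightarrow> 'a set \<Rightarrow> 'a \<Rightarrow> 'o::wellorder \<Rightarrow> 'a set" where
  "C_iter A R S a = ord_rec (SCC A R a)
     (\<lambda>X. scc_in A R (X - D_set R S X) a)
     (\<lambda>Xs. scc_in A R (\<Inter> Xs) a)"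

definition Delta_iter :: "'a set \<Rightarrow> ('a \<times> 'a) set \<Rightarrow> 'a set \<Rightarrow> 'o::wellorder \<Rightarrow> 'a set" where
  "Delta_iter A R S = ord_rec {} (Delta_op A R S) (\<lambda>Ds. \<Union> Ds)"

end

theory Submission
  imports Defs
begin

lemma ord_rec_eq:
  "ord_rec z s l (\<alpha>::'o::wellorder) = (if \<forall>\<beta>. \<not> \<beta> < \<alpha> then z
            else if \<exists>\<beta>. \<beta> < \<alpha> \<and> (\<forall>\<gamma>. \<gamma> < \<alpha> \<longrightarrow> \<gamma> \<le> \<beta>)
            then s (ord_rec z s l (THE \<beta>. \<beta> < \<alpha> \<and> (\<forall>\<gamma>. \<gamma> < \<alpha> \<longrightarrow> \<gamma> \<le> \<beta>)))
            else l (ord_rec z s l ` {\<beta>. \<beta> < \<alpha>}))"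
proof -
  have W: "wf {(x, y). x < (y::'o)}" by (rule wf)
  define f :: "'o \<Rightarrow> _" where "f = ord_rec z s l"
  have E: "f \<alpha> = (if \<forall>\<beta>. \<not> \<beta> < \<alpha> then z
            else if \<exists>\<beta>. \<beta> < \<alpha> \<and> (\<forall>\<gamma>. \<gamma> < \<alpha> \<longrightarrow> \<gamma> \<le> \<beta>)
            then s (cut f {(x, y). x < y} \<alpha> (THE \<beta>. \<beta> < \<alpha> \<and> (\<forall>\<gamma>. \<gamma> < \<alpha> \<longrightarrow> \<gamma> \<le> \<beta>)))
            else l (cut f {(x, y). x < y} \<alpha> ` {\<beta>. \<beta> < \<alpha>}))"
    unfolding f_def ord_rec_def by (subst wfrec[OF W]) simp
  show ?thesis
  proof (cases "\<exists>\<beta>. \<beta> < \<alpha> \<and> (\<forall>\<gamma>. \<gamma> < \<alpha> \<longrightarrow> \<gamma> \<le> \<beta>)")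
    case True
    then obtain p where p: "p < \<alpha>" "\<forall>\<gamma>. \<gamma> < \<alpha> \<longrightarrow> \<gamma> \<le> p" by blast
    have "(THE \<beta>. \<beta> < \<alpha> \<and> (\<forall>\<gamma>. \<gamma> < \<alpha> \<longrightarrow> \<gamma> \<le> \<beta>)) = p"
      using p by (intro the_equality) (auto intro: antisym)
    then show ?thesis using E p True unfolding f_def[symmetric] by (auto simp: cut_apply)
  next
    case False
    have "cut f {(x, y). x < y} \<alpha> ` {\<beta>. \<beta> < \<alpha>} = f ` {\<beta>. \<beta> < \<alpha>}"
      by (auto simp: cut_apply)
    then show ?thesis using E False unfolding f_def[symmetric] by auto
  qed
qed

lemma ord_rec_min: "\<forall>\<beta>. \<not> \<beta> < (\<alpha>::'o::wellorder) \<Longrightarrow> ord_rec z s l \<alpha> = z"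
  by (subst ord_rec_eq) simp

lemma ord_rec_suc: "p < (\<alpha>::'o::wellorder) \<Longrightarrow> \<forall>\<gamma>. \<gamma> < \<alpha> \<longrightarrow> \<gamma> \<le> p \<Longrightarrow>
   ord_rec z s l \<alpha> = s (ord_rec z s l p)"
proof -
  assume a: "p < \<alpha>" "\<forall>\<gamma>. \<gamma> < \<alpha> \<longrightarrow> \<gamma> \<le> p"
  have "(THE \<beta>. \<beta> < \<alpha> \<and> (\<forall>\<gamma>. \<gamma> < \<alpha> \<longrightarrow> \<gamma> \<le> \<beta>)) = p"
    using a by (intro the_equality) (auto intro: antisym)
  then show ?thesis using a by (subst ord_rec_eq) auto
qed

lemma ord_rec_lim: "\<beta>0 < (\<alpha>::'o::wellorder) \<Longrightarrow> \<not> (\<exists>\<beta>. \<beta> < \<alpha> \<and> (\<forall>\<gamma>. \<gamma> < \<alpha> \<longrightarrow> \<gamma> \<le> \<beta>)) \<Longrightarrow>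
   ord_rec z s l \<alpha> = l (ord_rec z s l ` {\<beta>. \<beta> < \<alpha>})"
  by (subst ord_rec_eq) auto


lemma reach_alt: "reach A R B x y \<longleftrightarrow> x \<in> A \<inter> B \<and> (x, y) \<in> (R \<inter> ((A \<inter> B) \<times> (A \<inter> B)))\<^sup>*"
  unfolding reach_def
  by (auto simp: rtrancl_eq_or_trancl Id_on_def dest: tranclD)

lemma reach_mem: "reach A R B x y \<Longrightarrow> x \<in> A \<inter> B \<and> y \<in> A \<inter> B"
  unfolding reach_def by (auto simp: Id_on_def dest: tranclD tranclD2)

lemma reach_refl: "x \<in> A \<inter> B \<Longrightarrow> reach A R B x x"
  unfolding reach_alt by auto

lemma reach_edge: "(x, y) \<in> R \<Longrightarrow> x \<in> A \<inter> B \<Longrightarrow> y \<in> A \<inter> B \<Longrightarrow> reach A R B x y"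
  unfolding reach_alt by auto

lemma reach_trans: "reach A R B x y \<Longrightarrow> reach A R B y z \<Longrightarrow> reach A R B x z"
  unfolding reach_alt by auto

lemma reach_mono: "B \<subseteq> B' \<Longrightarrow> reach A R B x y \<Longrightarrow> reach A R B' x y"
proof -
  assume "B \<subseteq> B'" "reach A R B x y"
  moreover have "(R \<inter> ((A \<inter> B) \<times> (A \<inter> B)))\<^sup>* \<subseteq> (R \<inter> ((A \<inter> B') \<times> (A \<inter> B')))\<^sup>*"
    using \<open>B \<subseteq> B'\<close> by (intro rtrancl_mono) auto
  ultimately show ?thesis unfolding reach_alt by auto
qed

lemma scc_mono: "B \<subseteq> B' \<Longrightarrow> scc_in A R B a \<subseteq> scc_in A R B' a"
  unfolding scc_in_def using reach_mono[of B B' A R] by auto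

lemma scc_sub: "scc_in A R B a \<subseteq> A \<inter> B"
proof
  fix b assume "b \<in> scc_in A R B a"
  then have "reach A R B a b" unfolding scc_in_def by simp
  from reach_mem[OF this] show "b \<in> A \<inter> B" by (elim conjE)
qed

lemma scc_restrict:
  assumes "B' \<subseteq> B" "scc_in A R B a \<subseteq> B'"
  shows "scc_in A R B' a = scc_in A R B a"
proof
  show "scc_in A R B' a \<subseteq> scc_in A R B a" using scc_mono[OF assms(1)] .
next
  have sub: "scc_in A R B a \<subseteq> A \<inter> B'" using assms(2) scc_sub[of A R B a] by blast
  have key: "reach A R B' x y" if "(x, y) \<in> (R \<inter> ((A \<inter> B) \<times> (A \<inter> B)))\<^sup>*"
      "x \<in> scc_in A R B a" "reach A R B y a" for x y
    using that
  proof (induction rule: rtrancl_induct)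
    case base
    have "x \<in> A \<inter> B'" using base sub by blast
    then show ?case by (rule reach_refl)
  next
    case (step y z)
    have yzR: "(y, z) \<in> R" "y \<in> A \<inter> B" "z \<in> A \<inter> B" using step(2) by blast+
    have yz: "reach A R B y z" using reach_edge[OF yzR] .
    have ya: "reach A R B y a" using reach_trans[OF yz step(5)] .
    have xy: "reach A R B' x y" using step.IH[OF step(4) ya] .
    have ax: "reach A R B a x" using step(4) by (simp add: scc_in_def)
    have "x \<in> A \<inter> B" using reach_mem[OF ax] by blast
    then have "reach A R B x y" using step(1) unfolding reach_alt by blast
    then have ay: "reach A R B a y" using reach_trans[OF ax] by blast
    have "y \<in> scc_in A R B a" using ay ya by (simp add: scc_in_def)
    moreover have "z \<in> scc_in A R B a" using reach_trans[OF ay yz] step(5) by (simp add: scc_in_def)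
    ultimately have "y \<in> A \<inter> B'" "z \<in> A \<inter> B'" using sub by blast+
    then have "reach A R B' y z" using reach_edge[OF yzR(1)] by blast
    then show ?case by (rule reach_trans[OF xy])
  qed
  show "scc_in A R B a \<subseteq> scc_in A R B' a"
  proof
    fix b assume b: "b \<in> scc_in A R B a"
    then have ab: "reach A R B a b" and ba: "reach A R B b a" unfolding scc_in_def by simp_all
    have "a \<in> A \<inter> B" using reach_mem[OF ab] by (elim conjE)
    then have aa: "reach A R B a a" by (rule reach_refl)
    have a_in: "a \<in> scc_in A R B a" using aa by (simp add: scc_in_def)
    have E1: "(a, b) \<in> (R \<inter> ((A \<inter> B) \<times> (A \<inter> B)))\<^sup>*" using ab unfolding reach_alt by blast
    have E2: "(b, a) \<in> (R \<inter> ((A \<inter> B) \<times> (A \<inter> B)))\<^sup>*" using ba unfolding reach_alt by blast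
    have "reach A R B' a b" using key[OF E1 a_in ba] .
    moreover have "reach A R B' b a" using key[OF E2 b aa] .
    ultimately show "b \<in> scc_in A R B' a" by (simp add: scc_in_def)
  qed
qed


lemma ord_cases:
  fixes \<alpha> :: "'o::wellorder"
  obtains (min) "\<forall>\<beta>. \<not> \<beta> < \<alpha>"
  | (suc) p where "p < \<alpha>" "\<forall>\<gamma>. \<gamma> < \<alpha> \<longrightarrow> \<gamma> \<le> p"
  | (lim) \<beta>0 where "\<beta>0 < \<alpha>" "\<not> (\<exists>\<beta>. \<beta> < \<alpha> \<and> (\<forall>\<gamma>. \<gamma> < \<alpha> \<longrightarrow> \<gamma> \<le> \<beta>))"
  by blast

lemma Delta_op_mono: "D \<subseteq> D' \<Longrightarrow> Delta_op A R S D \<subseteq> Delta_op A R S D'"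
proof
  fix x assume DD: "D \<subseteq> D'" and x: "x \<in> Delta_op A R S D"
  then obtain b where b: "x \<in> A" "b \<in> S" "(b, x) \<in> R" "\<not> reach A R (A - D) x b"
    unfolding Delta_op_def by blast
  have "\<not> reach A R (A - D') x b"
  proof
    assume "reach A R (A - D') x b"
    from reach_mono[OF _ this, of "A - D"] DD b(4) show False by blast
  qed
  then show "x \<in> Delta_op A R S D'" using b unfolding Delta_op_def by blast
qed

lemma Delta_props:
  fixes \<alpha> :: "'o::wellorder"
  shows "(\<forall>\<beta><\<alpha>. Delta_iter A R S \<beta> \<subseteq> Delta_iter A R S \<alpha>) \<and>
         Delta_iter A R S \<alpha> \<subseteq> Delta_op A R S (Delta_iter A R S \<alpha>)"
proof (induction \<alpha> rule: less_induct)
  case (less \<alpha>)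
  show ?case
  proof (cases \<alpha> rule: ord_cases)
    case min
    then have "Delta_iter A R S \<alpha> = {}" unfolding Delta_iter_def by (rule ord_rec_min)
    then show ?thesis using min by simp
  next
    case (suc p)
    have E: "Delta_iter A R S \<alpha> = Delta_op A R S (Delta_iter A R S p)"
      unfolding Delta_iter_def by (rule ord_rec_suc[OF suc])
    have IHp: "\<forall>\<beta><p. Delta_iter A R S \<beta> \<subseteq> Delta_iter A R S p"
      "Delta_iter A R S p \<subseteq> Delta_op A R S (Delta_iter A R S p)" using less.IH[OF suc(1)] by blast+
    have P1: "\<forall>\<beta><\<alpha>. Delta_iter A R S \<beta> \<subseteq> Delta_iter A R S \<alpha>"
    proof (intro allI impI)
      fix \<beta> assume "\<beta> < \<alpha>"
      then have "\<beta> \<le> p" using suc by blast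
      then have "Delta_iter A R S \<beta> \<subseteq> Delta_iter A R S p" using IHp(1)
        by (cases "\<beta> = p") auto
      then show "Delta_iter A R S \<beta> \<subseteq> Delta_iter A R S \<alpha>" using IHp(2) E by blast
    qed
    have "Delta_iter A R S p \<subseteq> Delta_iter A R S \<alpha>" using P1 suc(1) by blast
    then have "Delta_iter A R S \<alpha> \<subseteq> Delta_op A R S (Delta_iter A R S \<alpha>)"
      using E Delta_op_mono by metis
    then show ?thesis using P1 by blast
  next
    case (lim \<beta>0)
    have E: "Delta_iter A R S \<alpha> = \<Union> (Delta_iter A R S ` {\<beta>. \<beta> < \<alpha>})"
      unfolding Delta_iter_def by (rule ord_rec_lim[OF lim])
    have P1: "\<forall>\<beta><\<alpha>. Delta_iter A R S \<beta> \<subseteq> Delta_iter A R S \<alpha>" using E by blast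
    have "Delta_iter A R S \<alpha> \<subseteq> Delta_op A R S (Delta_iter A R S \<alpha>)"
    proof
      fix x assume "x \<in> Delta_iter A R S \<alpha>"
      then obtain \<gamma> where g: "\<gamma> < \<alpha>" "x \<in> Delta_iter A R S \<gamma>" using E by blast
      have "x \<in> Delta_op A R S (Delta_iter A R S \<gamma>)" using less.IH[OF g(1)] g(2) by blast
      moreover have "Delta_op A R S (Delta_iter A R S \<gamma>) \<subseteq> Delta_op A R S (Delta_iter A R S \<alpha>)"
        using P1 g(1) Delta_op_mono by metis
      ultimately show "x \<in> Delta_op A R S (Delta_iter A R S \<alpha>)" by blast
    qed
    then show ?thesis using P1 by blast
  qed
qed

lemma main:
  fixes \<alpha> :: "'o::wellorder"
  assumes "R \<subseteq> A \<times> A" "S \<subseteq> A"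
  shows "C_iter A R S a \<alpha> = scc_in A R (A - Delta_iter A R S \<alpha>) a"
proof (induction \<alpha> rule: less_induct)
  case (less \<alpha>)
  show ?case
  proof (cases \<alpha> rule: ord_cases)
    case min
    then have "Delta_iter A R S \<alpha> = {}" unfolding Delta_iter_def by (rule ord_rec_min)
    moreover have "C_iter A R S a \<alpha> = SCC A R a" unfolding C_iter_def using min by (rule ord_rec_min)
    ultimately show ?thesis by (simp add: SCC_def)
  next
    case (suc p)
    define X where "X = C_iter A R S a p"
    define P where "P = A - Delta_iter A R S p"
    define B where "B = A - Delta_iter A R S \<alpha>"
    have EC: "C_iter A R S a \<alpha> = scc_in A R (X - D_set R S X) a"
      unfolding X_def C_iter_def by (rule ord_rec_suc[OF suc])
    have ED: "Delta_iter A R S \<alpha> = Delta_op A R S (Delta_iter A R S p)"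
      unfolding Delta_iter_def by (rule ord_rec_suc[OF suc])
    have XP: "X = scc_in A R P a" unfolding X_def P_def by (rule less.IH[OF suc(1)])
    have mono: "Delta_iter A R S p \<subseteq> Delta_iter A R S \<alpha>" using Delta_props[of \<alpha> A R S] suc(1) by blast
    have BP: "B \<subseteq> P" unfolding B_def P_def using mono by blast
    have XA: "X \<subseteq> A" using XP scc_sub[of A R P a] by blast
    have claim: "x \<in> D_set R S X \<longleftrightarrow> x \<in> Delta_op A R S (Delta_iter A R S p)" if x: "x \<in> X" for x
    proof
      have ax: "reach A R P a x" and xa: "reach A R P x a" using x XP by (simp_all add: scc_in_def)
      {
        assume "x \<in> D_set R S X"
        then obtain b where b: "b \<in> S" "b \<notin> X" "(b, x) \<in> R" unfolding D_set_def by blast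
        have "\<not> reach A R P x b"
        proof
          assume xb: "reach A R P x b"
          have "b \<in> A \<inter> P" "x \<in> A \<inter> P" using reach_mem[OF xb] by blast+
          then have bx: "reach A R P b x" using reach_edge[OF b(3)] by blast
          have "reach A R P a b" by (rule reach_trans[OF ax xb])
          moreover have "reach A R P b a" by (rule reach_trans[OF bx xa])
          ultimately have "b \<in> X" using XP by (simp add: scc_in_def)
          then show False using b(2) by blast
        qed
        then show "x \<in> Delta_op A R S (Delta_iter A R S p)"
          using b x XA unfolding Delta_op_def P_def by blast
      }
      {
        assume "x \<in> Delta_op A R S (Delta_iter A R S p)"
        then obtain b where b: "b \<in> S" "(b, x) \<in> R" "\<not> reach A R P x b"
          unfolding Delta_op_def P_def by blast
        have "b \<notin> X"
        proof
          assume "b \<in> X"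
          then have "reach A R P a b" using XP by (simp add: scc_in_def)
          then have "reach A R P x b" by (rule reach_trans[OF xa])
          then show False using b(3) by blast
        qed
        then show "x \<in> D_set R S X" using b x unfolding D_set_def by blast
      }
    qed
    have XD: "X - D_set R S X = X \<inter> B"
    proof
      show "X - D_set R S X \<subseteq> X \<inter> B"
      proof
        fix x assume "x \<in> X - D_set R S X"
        then have "x \<in> X" "x \<notin> Delta_iter A R S \<alpha>" using claim ED by blast+
        then show "x \<in> X \<inter> B" using XA B_def by blast
      qed
      show "X \<inter> B \<subseteq> X - D_set R S X"
      proof
        fix x assume "x \<in> X \<inter> B"
        then have "x \<in> X" "x \<notin> Delta_iter A R S \<alpha>" unfolding B_def by blast+
        then show "x \<in> X - D_set R S X" using claim ED by blast
      qed
    qed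
    have "scc_in A R B a \<subseteq> X" using XP scc_mono[OF BP] by blast
    moreover have "scc_in A R B a \<subseteq> B" using scc_sub[of A R B a] by blast
    ultimately have "scc_in A R (X \<inter> B) a = scc_in A R B a"
      by (intro scc_restrict) blast+
    then show ?thesis using EC XD B_def by simp
  next
    case (lim \<beta>0)
    define B where "B = A - Delta_iter A R S \<alpha>"
    define Y where "Y = \<Inter> (C_iter A R S a ` {\<beta>. \<beta> < \<alpha>})"
    have EC: "C_iter A R S a \<alpha> = scc_in A R Y a"
      unfolding Y_def C_iter_def by (rule ord_rec_lim[OF lim])
    have ED: "Delta_iter A R S \<alpha> = \<Union> (Delta_iter A R S ` {\<beta>. \<beta> < \<alpha>})"
      unfolding Delta_iter_def by (rule ord_rec_lim[OF lim])
    have Cb: "C_iter A R S a \<beta> = scc_in A R (A - Delta_iter A R S \<beta>) a" if "\<beta> < \<alpha>" for \<beta>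
      using less.IH[OF that] .
    have YB: "Y \<subseteq> B"
    proof
      fix x assume x: "x \<in> Y"
      have "x \<in> A"
        using x lim(1) Cb[OF lim(1)] scc_sub[of A R "A - Delta_iter A R S \<beta>0" a] unfolding Y_def by blast
      moreover have "x \<notin> Delta_iter A R S \<beta>" if "\<beta> < \<alpha>" for \<beta>
        using x that Cb[OF that] scc_sub[of A R "A - Delta_iter A R S \<beta>" a] unfolding Y_def by blast
      ultimately show "x \<in> B" unfolding B_def ED by blast
    qed
    have "scc_in A R B a \<subseteq> Y"
    proof
      fix x assume x: "x \<in> scc_in A R B a"
      have "x \<in> C_iter A R S a \<beta>" if "\<beta> < \<alpha>" for \<beta>
      proof -
        have "B \<subseteq> A - Delta_iter A R S \<beta>" unfolding B_def ED using that by blast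
        from scc_mono[OF this, of A R a] show ?thesis using Cb[OF that] x by blast
      qed
      then show "x \<in> Y" unfolding Y_def by blast
    qed
    then have "scc_in A R Y a = scc_in A R B a" by (intro scc_restrict[OF YB])
    then show ?thesis using EC B_def by simp
  qed
qed

theorem lemma2:
  fixes A :: "'a set" and R :: "('a \<times> 'a) set" and S :: "'a set"
    and a :: 'a and \<alpha> :: "'o::wellorder"
  assumes "R \<subseteq> A \<times> A" and "S \<subseteq> A" and "a \<in> A"
  shows "C_iter A R S a \<alpha> =
           {b. reach A R (A - Delta_iter A R S \<alpha>) a b \<and> reach A R (A - Delta_iter A R S \<alpha>) b a}"
  using main[OF assms(1,2)] unfolding scc_in_def .

end
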